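(* Let $m \equiv 3 \pmod 4$ with $m > 3$, $n = 3^m - 1$, $v = (3^{(m+1)/2}+1)/2$ and $\delta = (3^{(m-1)/2}+7)/2$. Then $\gcd(v,n) = 1$, and, setting $T_{(0,3,m)}(v) = \{ vi \bmod n : i \in T_{(0,3,m)}\}$, we have $\{1, 2, \ldots, \delta-1\} \subseteq T_{(0,3,m)}(v)$.
   Context: For an integer $0 \le j \le n-1$ with $3$-adic expansion $j = \sum_{t=0}^{m-1} j_t 3^t$, $j_t \in \{0,1,2\}$, let $w_3(j) = \sum_{t=0}^{m-1} j_t$. For distinct $i_1,i_2 \in \{0,1,2,3\}$, $T_{(i_1,i_2,m)} = \{1 \le j \le n-1 : w_3(j) \equiv i_1 \text{ or } i_2 \pmod 4\}$. For an integer $b$, $b \bmod n$ is the unique $b_0 \in \{0,\ldots,n-1\}$ with $b \equiv b_0 \pmod n$. *)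

theory Defs
  imports Main
begin

fun w3 :: "nat \<Rightarrow> nat" where
  "w3 j = (if j = 0 then 0 else j mod 3 + w3 (j div 3))"

declare w3.simps[simp del]

definition T_set :: "nat \<Rightarrow> nat \<Rightarrow> nat \<Rightarrow> nat set" where
  "T_set i1 i2 m = {j. 1 \<le> j \<and> j \<le> 3^m - 2 \<and>
      (w3 j mod 4 = i1 mod 4 \<or> w3 j mod 4 = i2 mod 4)}"

end

theory Submission
  imports Defs
begin

lemma w3_eq: "w3 x = x mod 3 + w3 (x div 3)"
  by (cases "x = 0") (simp_all add: w3.simps[of x] w3.simps[of 0])

lemma w3_1: "w3 1 = 1"
  using w3_eq[of 1] w3.simps[of 0] by simp

lemma w3_concat: "B < 3^s \<Longrightarrow> w3 (A*3^s + B) = w3 A + w3 B"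
proof (induction s arbitrary: B)
  case 0
  then show ?case by (simp add: w3.simps[of 0])
next
  case (Suc s)
  have e: "A*3^Suc s + B = B + (A*3^s)*3" by simp
  have d: "(A*3^Suc s + B) div 3 = A*3^s + B div 3" unfolding e by simp
  have md: "(A*3^Suc s + B) mod 3 = B mod 3" unfolding e by simp
  have "B div 3 < 3^s" using Suc.prems by auto
  then have "w3 (A*3^s + B div 3) = w3 A + w3 (B div 3)" using Suc.IH by blast
  then show ?case using w3_eq[of "A*3^Suc s + B"] w3_eq[of B] d md by simp
qed

lemma w3_compl: "x < 3^s \<Longrightarrow> w3 (3^s - 1 - x) + w3 x = 2*s"
proof (induction s arbitrary: x)
  case 0
  then show ?case by (simp add: w3.simps[of 0])
next
  case (Suc s)
  define q where "q = x div 3"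
  define r where "r = x mod 3"
  have x: "x = 3*q + r" and r: "r < 3" unfolding q_def r_def by auto
  have q: "q < 3^s" using Suc.prems unfolding q_def by auto
  have y: "3^Suc s - 1 - x = 3*(3^s - 1 - q) + (2 - r)" using x r q by simp
  define z where "z = 3^s - 1 - q"
  have "r = 0 \<or> r = 1 \<or> r = 2" using r by auto
  then have "(3*z + (2-r)) mod 3 = 2 - r" "(3*z + (2-r)) div 3 = z" by auto
  then have "(3^Suc s - 1 - x) mod 3 = 2 - r" "(3^Suc s - 1 - x) div 3 = 3^s - 1 - q"
    unfolding y z_def by auto
  then have "w3 (3^Suc s - 1 - x) = (2 - r) + w3 (3^s - 1 - q)"
    using w3_eq[of "3^Suc s - 1 - x"] by simp
  moreover have "w3 x = r + w3 q" using w3_eq[of x] unfolding q_def r_def by simp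
  moreover have "w3 (3^s - 1 - q) + w3 q = 2*s" using Suc.IH q by blast
  ultimately show ?case using r by simp
qed

lemma mod_help: "(x::nat) = q*N + a \<Longrightarrow> a < N \<Longrightarrow> x mod N = a"
  by simp

lemma key:
  fixes p rp a :: nat
  assumes P: "3^p = 2*rp+1" and orp: "odd rp" and rp3: "3 \<le> rp" and op: "odd p"
    and a1: "1 \<le> a" and a2: "a \<le> rp+3"
  shows "\<exists>i\<in>T_set 0 3 (2*p+1). ((3*rp+2)*i) mod (3^(2*p+1)-1) = a"
proof -
  obtain k where k: "p = 2*k+1" using op oddE by blast
  have M: "3^(2*p+1) = 3*(2*rp+1)*(2*rp+1)"
    by (metis P mult.commute power_add power_one_right mult_2 mult.assoc)
  have n: "3^(2*p+1) - 1 = 12*rp*rp + 12*rp + 2" using M by (simp add: algebra_simps)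
  have n2: "3^(2*p+1) - 2 = 12*(rp*rp) + 12*rp + 1" using n by (simp add: mult.assoc)
  have H: "(3::nat)^(p+1) = 6*rp+3" using P by simp
  have rr: "3*rp \<le> rp*rp" using rp3 by simp
  show ?thesis
  proof (cases "even a")
    case True
    then obtain b where b: "a = 2*b" by blast
    define i where "i = (a-1)*3^(p+1) + (3^(p+1) - a)"
    have lt: "3^(p+1) - a < 3^(p+1)" using a1 by simp
    have "w3 i = w3 (a-1) + w3 (3^(p+1) - a)" unfolding i_def using w3_concat[OF lt] .
    moreover have "3^(p+1) - a = 3^(p+1) - 1 - (a-1)" using a1 by simp
    moreover have "w3 (3^(p+1) - 1 - (a-1)) + w3 (a-1) = 2*(p+1)"
      using w3_compl[of "a-1" "p+1"] H a2 by simp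
    ultimately have w: "w3 i = 2*(p+1)" by simp
    have "(a-1)*(6*rp+3) + (6*rp+3) = a*(6*rp+3)" using a1
      by (metis Suc_diff_1 add.commute less_le_trans mult_Suc zero_less_one)
    moreover have "(6*rp+3 - a) + a = 6*rp+3" using a2 rr by simp
    ultimately have "i + a = a*(6*rp+3)" unfolding i_def H by simp
    then have ieq: "i = a*(6*rp+2)" by (simp add: algebra_simps)
    have "(3*rp+2)*i = ((3*b))*(3^(2*p+1)-1) + a" unfolding n
      unfolding ieq b by (simp add: algebra_simps)
    then have md: "((3*rp+2)*i) mod (3^(2*p+1)-1) = a"
      by (rule mod_help) (unfold n, use a2 rp3 in linarith)
    have "i \<le> (rp+3)*(6*rp+2)" unfolding ieq using a2 by (rule mult_right_mono) simp
    moreover have "(rp+3)*(6*rp+2) = 6*(rp*rp) + 20*rp + 6" by (simp add: algebra_simps)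
    ultimately have "i \<le> 3^(2*p+1) - 2" unfolding n2 using rr rp3 by linarith
    moreover have "1 \<le> i" unfolding ieq using a1 by simp
    ultimately have "i \<in> T_set 0 3 (2*p+1)" unfolding T_set_def using w k by auto
    then show ?thesis using md by blast
  next
    case False
    then obtain c where c: "a = 2*c+1" using oddE by blast
    obtain d where d: "rp = 2*d+1" using orp oddE by blast
    show ?thesis
    proof (cases "a \<le> rp")
      case True
      define g where "g = (rp - a) div 2"
      have g: "rp = a + 2*g" unfolding g_def using c d True by presburger
      have d': "d = c + g" using g c d by simp
      define i where "i = (rp+a)*3^(p+1) + (3*rp+1-a)"
      have lt: "3*rp+1-a < 3^(p+1)" using H by simp
      have w1: "w3 i = w3 (rp+a) + w3 (3*rp+1-a)" unfolding i_def using w3_concat[OF lt] .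
      have "w3 (3^(p+1) - 1 - (3*rp+1-a)) + w3 (3*rp+1-a) = 2*(p+1)"
        using w3_compl[OF lt] .
      moreover have "3^(p+1) - 1 - (3*rp+1-a) = 1*3^p + (rp+a)" using H P True by simp
      moreover have "rp + a < 3^p" using P True by simp
      ultimately have "1 + w3 (rp+a) + w3 (3*rp+1-a) = 2*(p+1)"
        using w3_concat[of "rp+a" p 1] w3_1 by simp
      then have w: "w3 i = 2*p+1" using w1 by simp
      have ieq: "i = (rp+a)*(6*rp+3) + (4*c+6*g+3)" unfolding i_def H using g c by simp
      have "(3*rp+2)*i = ((3*d+3*c+4))*(3^(2*p+1)-1) + a" unfolding n
        unfolding ieq using g c d by (simp add: g c d' algebra_simps)
      then have md: "((3*rp+2)*i) mod (3^(2*p+1)-1) = a"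
        by (rule mod_help) (unfold n, use a2 rp3 in linarith)
      have "(rp+a)*(6*rp+3) \<le> (2*rp)*(6*rp+3)" using True by (intro mult_right_mono) auto
      then have "i \<le> (2*rp)*(6*rp+3) + (3*rp+1)" unfolding i_def H by linarith
      moreover have "(2*rp)*(6*rp+3) + (3*rp+1) = 12*(rp*rp) + 9*rp + 1" by (simp add: algebra_simps)
      ultimately have "i \<le> 3^(2*p+1) - 2" unfolding n2 by linarith
      moreover have "1 \<le> i" unfolding ieq by simp
      ultimately have "i \<in> T_set 0 3 (2*p+1)" unfolding T_set_def using w k by auto
      then show ?thesis using md by blast
    next
      case False
      then have ar: "a = rp + 2" using a2 c d by presburger
      define i where "i = 1*3^(p+1) + ((3::nat)^p - 1 - 0)"
      have lt: "(3::nat)^p - 1 - 0 < 3^(p+1)" using P by simp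
      have "w3 i = w3 1 + w3 (3^p - 1 - 0)" unfolding i_def using w3_concat[OF lt] .
      moreover have "w3 (3^p - 1 - 0) + w3 0 = 2*p" using w3_compl[of 0 p] by simp
      ultimately have w: "w3 i = 2*p+1" using w3_1 w3.simps[of 0] by simp
      have ieq: "i = 8*rp+3" unfolding i_def H P by simp
      have "(3*rp+2)*i = (2)*(3^(2*p+1)-1) + a" unfolding n
        unfolding ieq ar by (simp add: algebra_simps)
      then have md: "((3*rp+2)*i) mod (3^(2*p+1)-1) = a"
        by (rule mod_help) (unfold n, use a2 rp3 in linarith)
      have "i \<le> 3^(2*p+1) - 2" unfolding n2 ieq using rp3 by linarith
      moreover have "1 \<le> i" unfolding ieq by simp
      ultimately have "i \<in> T_set 0 3 (2*p+1)" unfolding T_set_def using w k by auto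
      then show ?thesis using md by blast
    qed
  qed
qed

theorem lemma2:
  fixes m :: nat
  assumes "m mod 4 = 3" and "m > 3"
  defines "n \<equiv> 3^m - 1"
      and "v \<equiv> (3^((m+1) div 2) + 1) div 2"
      and "\<delta> \<equiv> (3^((m-1) div 2) + 7) div 2"
  shows "gcd v n = 1 \<and> {1..<\<delta>} \<subseteq> (\<lambda>i. (v * i) mod n) ` T_set 0 3 m"
proof -
  obtain k where mk: "m = 4*k+3" using assms(1) by (metis mod_div_mult_eq add.commute mult.commute)
  have k1: "k \<ge> 1" using assms(2) mk by simp
  define p where "p = 2*k+1"
  have m: "m = 2*p+1" "(m+1) div 2 = p+1" "(m-1) div 2 = p" unfolding p_def mk by auto
  have P: "(3::nat)^p = 3*9^k" unfolding p_def by (simp add: power_mult)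
  have "9^k mod 4 = (9 mod 4::nat)^k mod 4" by (rule power_mod[symmetric])
  then have "(9::nat)^k mod 4 = 1" by simp
  then have P4: "(3::nat)^p mod 4 = 3" unfolding P by (simp add: mod_mult_right_eq[symmetric])
  define rp where "rp = ((3::nat)^p - 1) div 2"
  have Prp: "3^p = 2*rp+1" unfolding rp_def using P4 by presburger
  have orp: "odd rp" using Prp P4 by presburger
  have "(9::nat)^k \<ge> 9^1" using k1 by (intro power_increasing) auto
  then have rp3: "3 \<le> rp" using Prp P by simp
  have op: "odd p" unfolding p_def by simp
  have v: "v = 3*rp+2" unfolding v_def m using Prp by simp
  have dl: "\<delta> = rp+4" unfolding \<delta>_def m using Prp by simp
  have sub: "{1..<\<delta>} \<subseteq> (\<lambda>i. (v * i) mod n) ` T_set 0 3 m"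
  proof
    fix a assume "a \<in> {1..<\<delta>}"
    then have "1 \<le> a" "a \<le> rp+3" using dl by auto
    from key[OF Prp orp rp3 op this] obtain i where "i \<in> T_set 0 3 m" "(v*i) mod n = a"
      unfolding n_def v m by blast
    then show "a \<in> (\<lambda>i. (v * i) mod n) ` T_set 0 3 m" by blast
  qed
  have "1 \<in> {1..<\<delta>}" using dl by simp
  then have "1 \<in> (\<lambda>i. (v * i) mod n) ` T_set 0 3 m" using sub by blast
  then obtain i where "(v*i) mod n = 1" by auto
  moreover have "gcd v n dvd (v*i) mod n" by (simp add: dvd_mod)
  ultimately have "gcd v n = 1" by simp
  with sub show ?thesis by blast
qed

end
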